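(* Let $\Omega\subset\mathbb R^2$ be a bounded domain and let $u\in C^{2,1}(\bar\Omega\times[0,\infty))$ satisfy $E_2[u]:=-u_t\,\Delta u+\det u_{xx}>0$ on $\bar\Omega\times[0,\infty)$. Let $\mathbf u\in C^2(\bar\Omega)$ be strictly convex on $\bar\Omega$ (i.e. $\mathbf u_{xx}(x)$ is positive definite for every $x\in\bar\Omega$). Assume that there is a point $x_0\in\Omega$ with $\Delta u(x_0,0)>0$, that $\sup_{x\in\partial\Omega}|u(x,t)-\mathbf u(x)|\to0$ as $t\to\infty$, and that $\sup_{x\in\bar\Omega}|E_2[u](x,t)-\det\mathbf u_{xx}(x)|\to0$ as $t\to\infty$. Then $\sup_{x\in\bar\Omega}|u(x,t)-\mathbf u(x)|\to0$ as $t\to\infty$.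
   Context: $u_{xx}$ denotes the Hessian matrix of $u$ in the space variables $x=(x_1,x_2)$, and $u_t$ the time derivative. $C^{2,1}$ means twice continuously differentiable in $x$ and once continuously differentiable in $t$. The limits in the hypotheses and conclusion are understood uniformly in $x$. *)

theory Defs
  imports "HOL-Analysis.Analysis"
begin

definition lap2 :: "real^2^2 \<Rightarrow> real" where
  "lap2 H = H $ 1 $ 1 + H $ 2 $ 2"

definition pos_def2 :: "real^2^2 \<Rightarrow> bool" where
  "pos_def2 H \<longleftrightarrow> (\<forall>h::real^2. h \<noteq> 0 \<longrightarrow> h \<bullet> (H *v h) > 0)"

text \<open>u is C^{2,1} on closure(Omega) x [0,inf) with spatial gradient Du, spatial Hessian Hu
 and time derivative Ut: the derivatives exist at x in Omega, t >= 0 (one-sided in t at t = 0)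
 and u, Du, Hu, Ut extend continuously (jointly in (x,t)) to closure(Omega) x [0,inf).\<close>

definition C21_with :: "(real^2) set \<Rightarrow> (real^2 \<Rightarrow> real \<Rightarrow> real) \<Rightarrow> (real^2 \<Rightarrow> real \<Rightarrow> real^2)
    \<Rightarrow> (real^2 \<Rightarrow> real \<Rightarrow> real^2^2) \<Rightarrow> (real^2 \<Rightarrow> real \<Rightarrow> real) \<Rightarrow> bool" where
  "C21_with \<Omega> u Du Hu Ut \<longleftrightarrow>
     (\<forall>x\<in>\<Omega>. \<forall>t\<ge>0.
        ((\<lambda>y. u y t) has_derivative (\<lambda>h. Du x t \<bullet> h)) (at x) \<and>
        ((\<lambda>y. Du y t) has_derivative (\<lambda>h. Hu x t *v h)) (at x) \<and>
        ((\<lambda>s. u x s) has_real_derivative Ut x t) (at t within {0..})) \<and>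
     continuous_on (closure \<Omega> \<times> {0..}) (\<lambda>(x,t). u x t) \<and>
     continuous_on (closure \<Omega> \<times> {0..}) (\<lambda>(x,t). Du x t) \<and>
     continuous_on (closure \<Omega> \<times> {0..}) (\<lambda>(x,t). Hu x t) \<and>
     continuous_on (closure \<Omega> \<times> {0..}) (\<lambda>(x,t). Ut x t)"

definition C2_with :: "(real^2) set \<Rightarrow> (real^2 \<Rightarrow> real) \<Rightarrow> (real^2 \<Rightarrow> real^2)
    \<Rightarrow> (real^2 \<Rightarrow> real^2^2) \<Rightarrow> bool" where
  "C2_with \<Omega> v Dv Hv \<longleftrightarrow>
     (\<forall>x\<in>\<Omega>. (v has_derivative (\<lambda>h. Dv x \<bullet> h)) (at x) \<and>
              (Dv has_derivative (\<lambda>h. Hv x *v h)) (at x)) \<and>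
     continuous_on (closure \<Omega>) v \<and> continuous_on (closure \<Omega>) Dv \<and>
     continuous_on (closure \<Omega>) Hv"

definition E2 :: "real \<Rightarrow> real^2^2 \<Rightarrow> real" where
  "E2 ut H = - ut * lap2 H + det H"

end

theory Submission
  imports Defs
begin


lemma form2: "h \<bullet> ((M::real^2^2) *v h) = h$1*(M$1$1*h$1 + M$1$2*h$2) + h$2*(M$2$1*h$1 + M$2$2*h$2)"
  by (simp add: inner_vec_def matrix_vector_mult_def sum_2 algebra_simps)

lemma second_order_max:
  fixes f :: "real^2 \<Rightarrow> real" and G :: "real^2 \<Rightarrow> real^2"
  assumes S: "open S" "x \<in> S" and mx: "\<forall>y\<in>S. f y \<le> f x"
   and df: "\<forall>y\<in>S. (f has_derivative (\<lambda>k. G y \<bullet> k)) (at y)"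
   and dG: "(G has_derivative L) (at x)"
  shows "h \<bullet> L h \<le> 0"
proof (rule ccontr)
  assume c: "\<not> ?thesis"
  obtain r where r: "r>0" "ball x r \<subseteq> S" using S open_contains_ball by blast
  define d where "d = r / (norm h + 1)"
  have d: "d > 0" using r unfolding d_def by (intro divide_pos_pos) (auto intro: add_nonneg_pos)
  have inS: "x + s *\<^sub>R h \<in> S" if "\<bar>s\<bar> < d" for s
  proof -
    have "norm (s *\<^sub>R h) = \<bar>s\<bar> * norm h" by simp
    also have "\<dots> \<le> \<bar>s\<bar> * (norm h + 1)" by (simp add: mult_left_mono)
    also have "\<dots> < d * (norm h + 1)" using that by (intro mult_strict_right_mono) (auto intro: add_nonneg_pos)
    also have "\<dots> = r" unfolding d_def using norm_ge_zero[of h] by (simp del: norm_ge_zero)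
    finally show ?thesis using r by (auto simp: dist_norm)
  qed
  define \<phi> where "\<phi> s = f (x + s *\<^sub>R h)" for s
  define \<psi> where "\<psi> s = G (x + s *\<^sub>R h) \<bullet> h" for s
  have dphi: "(\<phi> has_real_derivative \<psi> s) (at s)" if "\<bar>s\<bar> < d" for s
  proof -
    have l: "((\<lambda>s. x + s *\<^sub>R h) has_derivative (\<lambda>e. e *\<^sub>R h)) (at s)"
      by (auto intro!: derivative_eq_intros)
    have "((\<lambda>s. f (x + s *\<^sub>R h)) has_derivative (\<lambda>e. G (x + s *\<^sub>R h) \<bullet> (e *\<^sub>R h))) (at s)"
      using has_derivative_compose[OF l] df inS[OF that] by blast
    moreover have "(\<lambda>e. G (x + s *\<^sub>R h) \<bullet> (e *\<^sub>R h)) = (*) (\<psi> s)"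
      by (auto simp: fun_eq_iff \<psi>_def)
    ultimately show ?thesis by (simp add: has_field_derivative_def \<phi>_def[abs_def])
  qed
  have dpsi: "(\<psi> has_real_derivative (h \<bullet> L h)) (at 0)"
  proof -
    have l: "((\<lambda>s. x + s *\<^sub>R h) has_derivative (\<lambda>e. e *\<^sub>R h)) (at 0)"
      by (auto intro!: derivative_eq_intros)
    have "((\<lambda>s. G (x + s *\<^sub>R h)) has_derivative (\<lambda>e. L (e *\<^sub>R h))) (at 0)"
      using has_derivative_compose[OF l] dG by simp
    then have "((\<lambda>s. G (x + s *\<^sub>R h) \<bullet> h) has_derivative (\<lambda>e. L (e *\<^sub>R h) \<bullet> h)) (at 0)"
      by (auto intro!: derivative_eq_intros)
    moreover have "(\<lambda>e. L (e *\<^sub>R h) \<bullet> h) = (*) (h \<bullet> L h)"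
    proof -
      have "linear L" using dG has_derivative_linear by blast
      then show ?thesis by (auto simp: fun_eq_iff linear_scale inner_commute)
    qed
    ultimately show ?thesis by (simp add: has_field_derivative_def \<psi>_def[abs_def])
  qed
  have "\<psi> 0 = 0"
    by (rule DERIV_local_max[OF dphi[of 0] d]) (use d mx inS in \<open>auto simp: \<phi>_def\<close>)
  then obtain d' where d': "d' > 0" "\<forall>e>0. e < d' \<longrightarrow> 0 < \<psi> e"
    using DERIV_pos_inc_right[OF dpsi] c by auto
  define e where "e = min d d' / 2"
  have e: "0 < e" "e < d" "e < d'" using d d' by (auto simp: e_def)
  have der: "(\<phi> has_derivative (\<lambda>y. y * \<psi> z)) (at z within {0..e})" if "0 \<le> z" "z \<le> e" for z
  proof -
    have "\<bar>z\<bar> < d" using that e by auto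
    then have "(\<phi> has_derivative (*) (\<psi> z)) (at z)" using dphi by (simp add: has_field_derivative_def)
    moreover have "(*) (\<psi> z) = (\<lambda>y. y * \<psi> z)" by (simp add: fun_eq_iff mult.commute)
    ultimately show ?thesis by (metis has_derivative_at_withinI)
  qed
  have "\<exists>z\<in>{0<..<e}. \<phi> e - \<phi> 0 = (\<lambda>y. y * \<psi> z) (e - 0)"
    by (rule mvt_simple[OF e(1) der])
  then obtain z where z: "0 < z" "z < e" "\<phi> e - \<phi> 0 = e * \<psi> z" by auto
  have "\<psi> z > 0" using d' z e by auto
  then have "\<phi> e > \<phi> 0" using z e by (metis diff_gt_0_iff_gt mult_pos_pos)
  moreover have "\<phi> e \<le> \<phi> 0" using mx inS[of e] e by (simp add: \<phi>_def)
  ultimately show False by simp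
qed

lemma time_max:
  fixes \<phi> :: "real \<Rightarrow> real"
  assumes "T < t" "(\<phi> has_real_derivative l) (at t)" "\<forall>s\<in>{T..t}. \<phi> s \<le> \<phi> t"
  shows "l \<ge> 0"
proof (rule ccontr)
  assume "\<not> l \<ge> 0"
  then obtain d where d: "d>0" "\<forall>h>0. h < d \<longrightarrow> \<phi> t < \<phi> (t - h)"
    using DERIV_neg_dec_left[OF assms(2)] by auto
  define h where "h = min d (t - T) / 2"
  have "h > 0" "h < d" "h < t - T" using d assms(1) by (auto simp: h_def)
  then show False using d assms(3)[rule_format, of "t - h"] by auto
qed

lemma at_pos_within: "(t::real) > 0 \<Longrightarrow> at t within {0..} = at t"
  by (rule at_within_open_subset[of _ "{0<..}"]) auto



lemma line_deriv1:
  fixes f :: "real^2 \<Rightarrow> real"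
  assumes "(f has_derivative (\<lambda>k. G (a + \<sigma> *\<^sub>R h) \<bullet> k)) (at (a + \<sigma> *\<^sub>R h))"
  shows "((\<lambda>\<sigma>. f (a + \<sigma> *\<^sub>R h)) has_real_derivative (G (a + \<sigma> *\<^sub>R h) \<bullet> h)) (at \<sigma>)"
proof -
  have l: "((\<lambda>s. a + s *\<^sub>R h) has_derivative (\<lambda>e. e *\<^sub>R h)) (at \<sigma>)"
    by (auto intro!: derivative_eq_intros)
  have "((\<lambda>s. f (a + s *\<^sub>R h)) has_derivative (\<lambda>e. G (a + \<sigma> *\<^sub>R h) \<bullet> (e *\<^sub>R h))) (at \<sigma>)"
    using has_derivative_compose[OF l assms] by simp
  moreover have "(\<lambda>e. G (a + \<sigma> *\<^sub>R h) \<bullet> (e *\<^sub>R h)) = (*) (G (a + \<sigma> *\<^sub>R h) \<bullet> h)"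
    by (auto simp: fun_eq_iff)
  ultimately show ?thesis by (simp add: has_field_derivative_def)
qed

lemma line_deriv2:
  fixes G :: "real^2 \<Rightarrow> real^2"
  assumes "(G has_derivative (\<lambda>k. H (a + \<rho> *\<^sub>R k0) *v k)) (at (a + \<rho> *\<^sub>R k0))"
  shows "((\<lambda>\<rho>. G (a + \<rho> *\<^sub>R k0) \<bullet> h) has_real_derivative ((H (a + \<rho> *\<^sub>R k0) *v k0) \<bullet> h)) (at \<rho>)"
proof -
  have l: "((\<lambda>s. a + s *\<^sub>R k0) has_derivative (\<lambda>e. e *\<^sub>R k0)) (at \<rho>)"
    by (auto intro!: derivative_eq_intros)
  have "((\<lambda>s. G (a + s *\<^sub>R k0)) has_derivative (\<lambda>e. H (a + \<rho> *\<^sub>R k0) *v (e *\<^sub>R k0))) (at \<rho>)"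
    using has_derivative_compose[OF l assms] by simp
  then have "((\<lambda>s. G (a + s *\<^sub>R k0) \<bullet> h) has_derivative (\<lambda>e. (H (a + \<rho> *\<^sub>R k0) *v (e *\<^sub>R k0)) \<bullet> h)) (at \<rho>)"
    by (auto intro!: derivative_eq_intros)
  moreover have "(\<lambda>e. (H (a + \<rho> *\<^sub>R k0) *v (e *\<^sub>R k0)) \<bullet> h) = (*) ((H (a + \<rho> *\<^sub>R k0) *v k0) \<bullet> h)"
    by (auto simp: fun_eq_iff matrix_vector_mult_scaleR)
  ultimately show ?thesis by (simp add: has_field_derivative_def)
qed

lemma second_diff:
  fixes f :: "real^2 \<Rightarrow> real" and G :: "real^2 \<Rightarrow> real^2" and H :: "real^2 \<Rightarrow> real^2^2"
  assumes S: "ball x r \<subseteq> S"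
    and df: "\<forall>y\<in>S. (f has_derivative (\<lambda>k. G y \<bullet> k)) (at y)"
    and dG: "\<forall>y\<in>S. (G has_derivative (\<lambda>k. H y *v k)) (at y)"
    and h: "norm h \<le> 1" and k: "norm k \<le> 1" and s: "0 < s" "2 * s < r"
  shows "\<exists>y. dist y x < 2 * s \<and>
     f (x + s *\<^sub>R h + s *\<^sub>R k) - f (x + s *\<^sub>R h) - f (x + s *\<^sub>R k) + f x = s^2 * ((H y *v k) \<bullet> h)"
proof -
  have inS: "x + a *\<^sub>R h + b *\<^sub>R k \<in> S" if "0 \<le> a" "a \<le> s" "0 \<le> b" "b \<le> s" for a b
  proof -
    have "norm (a *\<^sub>R h + b *\<^sub>R k) \<le> norm (a *\<^sub>R h) + norm (b *\<^sub>R k)" by (rule norm_triangle_ineq)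
    also have "\<dots> \<le> a + b" using that h k
      by (simp, intro add_mono) (auto simp: mult_left_le)
    finally have "norm (a *\<^sub>R h + b *\<^sub>R k) < r" using that s by linarith
    then have "x + (a *\<^sub>R h + b *\<^sub>R k) \<in> ball x r" by (metis mem_ball dist_commute dist_norm add_diff_cancel_left')
    then show ?thesis using S by (auto simp: add.assoc)
  qed
  define g where "g \<sigma> = f (x + \<sigma> *\<^sub>R h + s *\<^sub>R k) - f (x + \<sigma> *\<^sub>R h)" for \<sigma>
  have dg: "(g has_real_derivative ((G (x + s *\<^sub>R k + \<sigma> *\<^sub>R h) - G (x + \<sigma> *\<^sub>R h)) \<bullet> h)) (at \<sigma>)"
    if "0 \<le> \<sigma>" "\<sigma> \<le> s" for \<sigma>
  proof -
    have e1: "x + \<sigma> *\<^sub>R h + s *\<^sub>R k = (x + s *\<^sub>R k) + \<sigma> *\<^sub>R h" by (simp add: algebra_simps)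
    have a: "((\<lambda>\<sigma>. f ((x + s *\<^sub>R k) + \<sigma> *\<^sub>R h)) has_real_derivative (G ((x + s *\<^sub>R k) + \<sigma> *\<^sub>R h) \<bullet> h)) (at \<sigma>)"
      by (rule line_deriv1) (use df inS[of \<sigma> s] s e1 that in \<open>auto\<close>)
    have b: "((\<lambda>\<sigma>. f (x + \<sigma> *\<^sub>R h)) has_real_derivative (G (x + \<sigma> *\<^sub>R h) \<bullet> h)) (at \<sigma>)"
      by (rule line_deriv1) (use df inS[of \<sigma> 0] s that in \<open>auto\<close>)
    have "(\<lambda>\<sigma>. f ((x + s *\<^sub>R k) + \<sigma> *\<^sub>R h) - f (x + \<sigma> *\<^sub>R h)) = g"
      by (auto simp: g_def fun_eq_iff algebra_simps)
    with DERIV_diff[OF a b] show ?thesis by (simp add: inner_diff_left)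
  qed
  obtain \<xi> where xi: "0 < \<xi>" "\<xi> < s"
    "g s - g 0 = (s - 0) * ((G (x + s *\<^sub>R k + \<xi> *\<^sub>R h) - G (x + \<xi> *\<^sub>R h)) \<bullet> h)"
    using MVT2[OF s(1), of g "\<lambda>\<sigma>. (G (x + s *\<^sub>R k + \<sigma> *\<^sub>R h) - G (x + \<sigma> *\<^sub>R h)) \<bullet> h"] dg by auto
  define \<psi> where "\<psi> \<rho> = G (x + \<xi> *\<^sub>R h + \<rho> *\<^sub>R k) \<bullet> h" for \<rho>
  have dpsi: "(\<psi> has_real_derivative ((H (x + \<xi> *\<^sub>R h + \<rho> *\<^sub>R k) *v k) \<bullet> h)) (at \<rho>)"
    if "0 \<le> \<rho>" "\<rho> \<le> s" for \<rho>
    unfolding \<psi>_def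
    by (rule line_deriv2) (use dG inS[of \<xi> \<rho>] that xi in \<open>auto\<close>)
  obtain \<eta> where eta: "0 < \<eta>" "\<eta> < s"
    "\<psi> s - \<psi> 0 = (s - 0) * ((H (x + \<xi> *\<^sub>R h + \<eta> *\<^sub>R k) *v k) \<bullet> h)"
    using MVT2[OF s(1), of \<psi> "\<lambda>\<rho>. (H (x + \<xi> *\<^sub>R h + \<rho> *\<^sub>R k) *v k) \<bullet> h"] dpsi by auto
  define y where "y = x + \<xi> *\<^sub>R h + \<eta> *\<^sub>R k"
  have "dist y x < 2 * s"
  proof -
    have "norm (\<xi> *\<^sub>R h + \<eta> *\<^sub>R k) \<le> norm (\<xi> *\<^sub>R h) + norm (\<eta> *\<^sub>R k)" by (rule norm_triangle_ineq)
    also have "\<dots> \<le> \<xi> + \<eta>" using xi eta h k by (simp, intro add_mono) (auto simp: mult_left_le)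
    finally have "norm (\<xi> *\<^sub>R h + \<eta> *\<^sub>R k) < 2 * s" using xi eta by simp
    moreover have "dist y x = norm (\<xi> *\<^sub>R h + \<eta> *\<^sub>R k)" by (simp add: y_def dist_norm)
    ultimately show ?thesis by simp
  qed
  moreover have "f (x + s *\<^sub>R h + s *\<^sub>R k) - f (x + s *\<^sub>R h) - f (x + s *\<^sub>R k) + f x = s^2 * ((H y *v k) \<bullet> h)"
  proof -
    have "f (x + s *\<^sub>R h + s *\<^sub>R k) - f (x + s *\<^sub>R h) - f (x + s *\<^sub>R k) + f x = g s - g 0"
      by (simp add: g_def)
    also have "\<dots> = s * (\<psi> s - \<psi> 0)" using xi(3)
      by (simp add: \<psi>_def inner_diff_left algebra_simps)
    also have "\<dots> = s^2 * ((H y *v k) \<bullet> h)" using eta(3) by (simp add: y_def power2_eq_square)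
    finally show ?thesis .
  qed
  ultimately show ?thesis by blast
qed



lemma axis_entries:
  fixes M :: "real^2^2"
  shows "(M *v axis 2 1) \<bullet> axis 1 1 = M$1$2" "(M *v axis 1 1) \<bullet> axis 2 1 = M$2$1"
  by (simp_all add: inner_vec_def matrix_vector_mult_def sum_2 axis_def)

lemma abs_aux: "\<bar>a - p\<bar> < \<bar>p - q\<bar> / 2 \<Longrightarrow> \<bar>b - q\<bar> < \<bar>p - q\<bar> / 2 \<Longrightarrow> a = b \<Longrightarrow> False" for a b p q :: real
  by (simp add: abs_if split: if_splits)

lemma schwarz:
  fixes f :: "real^2 \<Rightarrow> real" and G :: "real^2 \<Rightarrow> real^2" and H :: "real^2 \<Rightarrow> real^2^2"
  assumes S: "open S" "x \<in> S"
    and df: "\<forall>y\<in>S. (f has_derivative (\<lambda>k. G y \<bullet> k)) (at y)"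
    and dG: "\<forall>y\<in>S. (G has_derivative (\<lambda>k. H y *v k)) (at y)"
    and cH: "continuous_on S H"
  shows "H x $1$2 = H x $2$1"
proof (rule ccontr)
  assume ne: "H x $1$2 \<noteq> H x $2$1"
  define c where "c = \<bar>H x $1$2 - H x $2$1\<bar>"
  have c: "c > 0" using ne by (simp add: c_def)
  obtain r where r: "r>0" "ball x r \<subseteq> S" using S open_contains_ball by blast
  have ic: "isCont H x" using cH S continuous_on_eq_continuous_at by blast
  have "isCont (\<lambda>y. H y $ i $ j) x" for i j using ic by simp
  then have ed: "\<exists>d>0. \<forall>y. dist y x < d \<longrightarrow> dist (H y $ i $ j) (H x $ i $ j) < c / 2" for i j
    using c unfolding continuous_at_eps_delta by (meson half_gt_zero)
  obtain d1 where d1: "d1 > 0" "\<forall>y. dist y x < d1 \<longrightarrow> dist (H y $ 1 $ 2) (H x $ 1 $ 2) < c / 2"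
    using ed by blast
  obtain d2 where d2: "d2 > 0" "\<forall>y. dist y x < d2 \<longrightarrow> dist (H y $ 2 $ 1) (H x $ 2 $ 1) < c / 2"
    using ed by blast
  define s where "s = min r (min d1 d2) / 4"
  have s: "0 < s" "2 * s < r" "2 * s < d1" "2 * s < d2" using r d1 d2 by (auto simp: s_def)
  define h :: "real^2" where "h = axis 1 1"
  define k :: "real^2" where "k = axis 2 1"
  have nh: "norm h \<le> 1" "norm k \<le> 1" by (simp_all add: h_def k_def)
  obtain y1 where y1: "dist y1 x < 2 * s"
    "f (x + s *\<^sub>R h + s *\<^sub>R k) - f (x + s *\<^sub>R h) - f (x + s *\<^sub>R k) + f x = s^2 * ((H y1 *v k) \<bullet> h)"
    using second_diff[OF r(2) df dG nh s(1,2)] by blast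
  obtain y2 where y2: "dist y2 x < 2 * s"
    "f (x + s *\<^sub>R k + s *\<^sub>R h) - f (x + s *\<^sub>R k) - f (x + s *\<^sub>R h) + f x = s^2 * ((H y2 *v h) \<bullet> k)"
    using second_diff[OF r(2) df dG nh(2) nh(1) s(1,2)] by blast
  have "x + s *\<^sub>R k + s *\<^sub>R h = x + s *\<^sub>R h + s *\<^sub>R k" by (simp add: algebra_simps)
  then have "s^2 * ((H y1 *v k) \<bullet> h) = s^2 * ((H y2 *v h) \<bullet> k)" using y1(2) y2(2) by (metis (no_types, lifting) diff_diff_eq add.commute)
  then have eq: "H y1 $1$2 = H y2 $2$1" using s(1) by (simp add: h_def k_def axis_entries)
  have "dist (H y1 $ 1 $ 2) (H x $ 1 $ 2) < c / 2" using d1 y1 s by auto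
  moreover have "dist (H y2 $ 2 $ 1) (H x $ 2 $ 1) < c / 2" using d2 y2 s by auto
  ultimately show False using eq unfolding c_def dist_real_def using abs_aux by blast
qed



lemma core_ineq:
  fixes p r q d1 d2 e :: real
  assumes "0 \<le> p" "0 \<le> r" "q^2 \<le> p*r" "0 \<le> d1" "0 \<le> d2" "e^2 \<le> d1*d2"
  shows "2*q*e \<le> p*d2 + r*d1"
proof -
  have "(2*q*e)^2 = 4 * (q^2) * (e^2)" by (simp add: power2_eq_square)
  also have "\<dots> \<le> 4 * (p*r) * (d1*d2)"
    using assms by (intro mult_left_mono mult_mono) auto
  also have "\<dots> \<le> (p*d2 + r*d1)^2"
  proof -
    have "0 \<le> (p*d2 - r*d1)^2" by simp
    then show ?thesis by (simp add: power2_eq_square algebra_simps)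
  qed
  finally have "\<bar>2*q*e\<bar> \<le> \<bar>p*d2 + r*d1\<bar>" by (simp only: abs_le_square_iff)
  moreover have "0 \<le> p*d2 + r*d1" using assms by simp
  ultimately show ?thesis by linarith
qed

lemma psd_real:
  fixes d1 d2 e :: real
  assumes "\<forall>a b. 0 \<le> d1*a^2 + 2*e*a*b + d2*b^2"
  shows "0 \<le> d1" "0 \<le> d2" "e^2 \<le> d1*d2"
proof -
  show d1: "0 \<le> d1" using assms[rule_format, of 1 0] by simp
  show d2: "0 \<le> d2" using assms[rule_format, of 0 1] by simp
  have A: "0 \<le> d1 * (d1*d2 - e^2)"
    using assms[rule_format, of e "-d1"] by (simp add: power2_eq_square algebra_simps)
  have B: "0 \<le> d2 * (d1*d2 - e^2)"
    using assms[rule_format, of d2 "-e"] by (simp add: power2_eq_square algebra_simps)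
  show "e^2 \<le> d1*d2"
  proof (cases "d1 > 0 \<or> d2 > 0")
    case True
    then show ?thesis using A B by (auto simp: zero_le_mult_iff)
  next
    case False
    then have "d1 = 0" "d2 = 0" using d1 d2 by auto
    then have "0 \<le> 2*e" "0 \<le> -2*e" using assms[rule_format, of 1 1] assms[rule_format, of 1 "-1"] by auto
    then show ?thesis using \<open>d1 = 0\<close> by simp
  qed
qed

lemma upper_alg:
  fixes a b c d1 d2 e :: real
  assumes "a + c > 0" "a*c - b^2 > 0" "0 \<le> d1" "0 \<le> d2" "e^2 \<le> d1*d2"
  shows "a*c - b^2 \<le> (a+d1)*(c+d2) - (b+e)^2"
proof -
  have "0 \<le> b^2" by simp
  then have "a*c > 0" using assms by linarith
  then have "a > 0 \<and> c > 0 \<or> a < 0 \<and> c < 0" by (auto simp: zero_less_mult_iff)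
  then have ac: "a > 0" "c > 0" using assms(1) by auto
  have "2*b*e \<le> a*d2 + c*d1"
    by (rule core_ineq) (use ac assms in auto)
  moreover have "(a+d1)*(c+d2) - (b+e)^2 = a*c - b^2 + (a*d2 + c*d1 - 2*b*e) + (d1*d2 - e^2)"
    by (simp add: algebra_simps power2_eq_square)
  ultimately show ?thesis using assms by linarith
qed

lemma lower_alg:
  fixes p q r d1 d2 e \<delta> :: real
  assumes "0 \<le> p" "0 \<le> r" "q^2 \<le> p*r" "0 \<le> d1" "0 \<le> d2" "e^2 \<le> d1*d2"
  shows "(p+2*\<delta>+d1)*(r+2*\<delta>+d2) - (q+e)^2 \<ge> (p+2*\<delta>)*(r+2*\<delta>) - q^2 + 2*\<delta>*(d1+d2)"
proof -
  have "2*q*e \<le> p*d2 + r*d1" by (rule core_ineq) (use assms in auto)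
  moreover have "(p+2*\<delta>+d1)*(r+2*\<delta>+d2) - (q+e)^2 = (p+2*\<delta>)*(r+2*\<delta>) - q^2 + 2*\<delta>*(d1+d2)
     + (p*d2 + r*d1 - 2*q*e) + (d1*d2 - e^2)"
    by (simp add: algebra_simps power2_eq_square)
  ultimately show ?thesis using assms by linarith
qed



lemma upper_final:
  fixes a11 a12 a22 p q r ut c E \<delta> \<eta> \<tau> \<mu> :: real
  assumes psd: "\<forall>a b. 0 \<le> (p - 2*\<delta> - a11)*a^2 + 2*(q - a12)*a*b + (r - 2*\<delta> - a22)*b^2"
    and lap: "a11 + a22 > 0"
    and ut: "ut + c \<ge> 0" "0 \<le> c" "c * (p+r) \<le> \<eta>"
    and E: "E = -ut*(a11+a22) + (a11*a22 - a12^2)"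
    and f: "E > p*r - q^2 - \<eta>"
    and k: "p + r \<ge> \<tau>" "4*\<delta> \<le> \<tau>" "0 \<le> \<delta>" "p*r - q^2 \<ge> \<mu>" "3*\<eta> \<le> \<delta>*\<tau>" "3*\<eta> \<le> \<mu>" "0 \<le> \<eta>"
  shows False
proof -
  define d1 where "d1 = p - 2*\<delta> - a11"
  define d2 where "d2 = r - 2*\<delta> - a22"
  define e where "e = q - a12"
  have ps: "0 \<le> d1" "0 \<le> d2" "e^2 \<le> d1*d2" using psd_real[of d1 e d2] psd
    by (simp_all add: d1_def d2_def e_def)
  have "a11 + a22 \<le> p + r" using ps k by (simp add: d1_def d2_def)
  have "-ut*(a11+a22) \<le> c*(a11+a22)" using ut lap by (intro mult_right_mono) auto
  also have "\<dots> \<le> c*(p+r)" using ut \<open>a11 + a22 \<le> p + r\<close> by (intro mult_left_mono) auto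
  finally have t1: "-ut*(a11+a22) \<le> \<eta>" using ut by linarith
  show False
  proof (cases "a11*a22 - a12^2 > 0")
    case False
    then show False using t1 E f k by linarith
  next
    case True
    have "a11*a22 - a12^2 \<le> (a11+d1)*(a22+d2) - (a12+e)^2"
      by (rule upper_alg) (use lap True ps in auto)
    also have "\<dots> = p*r - q^2 - 2*\<delta>*(p+r) + 4*\<delta>^2"
      by (simp add: d1_def d2_def e_def algebra_simps power2_eq_square)
    finally have dA: "a11*a22 - a12^2 \<le> p*r - q^2 - 2*\<delta>*(p+r) + 4*\<delta>^2" .
    have "\<delta>*(4*\<delta>) \<le> \<delta>*(p+r)" using k by (intro mult_left_mono) auto
    then have "4*\<delta>^2 \<le> \<delta>*(p+r)" by (simp add: power2_eq_square algebra_simps)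
    moreover have "\<delta>*\<tau> \<le> \<delta>*(p+r)" using k by (simp add: mult_left_mono)
    ultimately show False using dA t1 E f k by linarith
  qed
qed

lemma lower_final:
  fixes a11 a12 a22 p q r ut c E \<delta> \<eta> \<tau> :: real
  assumes psd: "\<forall>a b. 0 \<le> (a11 - p - 2*\<delta>)*a^2 + 2*(a12 - q)*a*b + (a22 - r - 2*\<delta>)*b^2"
    and pos: "0 \<le> p" "0 \<le> r" "q^2 \<le> p*r"
    and ut: "ut \<le> c" "0 \<le> c" "c \<le> 2*\<delta>" "c * (p + r + 4*\<delta>) \<le> \<eta>"
    and E: "E = -ut*(a11+a22) + (a11*a22 - a12^2)"
    and f: "E < p*r - q^2 + \<eta>"
    and k: "p + r \<ge> \<tau>" "0 \<le> \<delta>" "3*\<eta> \<le> \<delta>*\<tau>" "0 \<le> \<eta>"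
  shows False
proof -
  define d1 where "d1 = a11 - p - 2*\<delta>"
  define d2 where "d2 = a22 - r - 2*\<delta>"
  define e where "e = a12 - q"
  have ps: "0 \<le> d1" "0 \<le> d2" "e^2 \<le> d1*d2" using psd_real[of d1 e d2] psd
    by (simp_all add: d1_def d2_def e_def)
  have lapA: "a11 + a22 = p + r + 4*\<delta> + d1 + d2" by (simp add: d1_def d2_def)
  have "a11 + a22 \<ge> 0" using lapA ps pos k by linarith
  then have t1: "ut*(a11+a22) \<le> c*(a11+a22)" using ut by (intro mult_right_mono) auto
  have "(p+2*\<delta>+d1)*(r+2*\<delta>+d2) - (q+e)^2 \<ge> (p+2*\<delta>)*(r+2*\<delta>) - q^2 + 2*\<delta>*(d1+d2)"
    by (rule lower_alg) (use pos ps in auto)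
  moreover have "(p+2*\<delta>+d1)*(r+2*\<delta>+d2) - (q+e)^2 = a11*a22 - a12^2"
    by (simp add: d1_def d2_def e_def)
  moreover have "(p+2*\<delta>)*(r+2*\<delta>) - q^2 = p*r - q^2 + 2*\<delta>*(p+r) + 4*\<delta>^2"
    by (simp add: algebra_simps power2_eq_square)
  moreover have "c*(d1+d2) \<le> 2*\<delta>*(d1+d2)" using ut ps by (intro mult_right_mono) auto
  moreover have "\<delta>*\<tau> \<le> \<delta>*(p+r)" using k by (simp add: mult_left_mono)
  moreover have "0 \<le> \<delta>^2" by simp
  moreover have "c*(a11+a22) = c*(p + r + 4*\<delta>) + c*(d1+d2)" using lapA by (simp add: algebra_simps)
  ultimately show False using t1 E f k ut by linarith
qed



lemma comparison:
  fixes z :: "real^2 \<Rightarrow> real \<Rightarrow> real" and \<Omega> :: "(real^2) set"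
  assumes op: "open \<Omega>" and bdd: "bounded \<Omega>"
    and cont: "continuous_on (closure \<Omega> \<times> {T..}) (\<lambda>p. z (fst p) (snd p))"
    and bd: "\<forall>x\<in>frontier \<Omega>. \<forall>t\<ge>T. z x t \<le> 0"
    and init: "\<forall>x\<in>closure \<Omega>. z x T \<le> 0"
    and noint: "\<And>x t. x\<in>\<Omega> \<Longrightarrow> t > T \<Longrightarrow> z x t > 0 \<Longrightarrow> \<forall>y\<in>\<Omega>. z y t \<le> z x t
        \<Longrightarrow> \<forall>s\<in>{T..t}. z x s \<le> z x t \<Longrightarrow> False"
  shows "\<forall>x\<in>closure \<Omega>. \<forall>t\<ge>T. z x t \<le> 0"
proof (intro ballI allI impI)
  fix x1 t1 assume x1: "x1 \<in> closure \<Omega>" and t1: "t1 \<ge> T"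
  show "z x1 t1 \<le> 0"
  proof (rule ccontr)
    assume pos: "\<not> z x1 t1 \<le> 0"
    define C where "C = closure \<Omega> \<times> {T..t1}"
    have cC: "compact C" unfolding C_def using bdd by (intro compact_Times) (auto simp: compact_closure)
    have inC: "(x1, t1) \<in> C" using x1 t1 by (auto simp: C_def)
    have ccont: "continuous_on C (\<lambda>p. z (fst p) (snd p))"
      by (rule continuous_on_subset[OF cont]) (auto simp: C_def)
    obtain pm where pm: "pm \<in> C" "\<forall>y\<in>C. z (fst y) (snd y) \<le> z (fst pm) (snd pm)"
      using continuous_attains_sup[OF cC _ ccont] inC by blast
    obtain x t where xt: "pm = (x, t)" by (cases pm)
    have zpos: "z x t > 0" using pm(2) inC pos xt by force
    have xK: "x \<in> closure \<Omega>" and tT: "T \<le> t" "t \<le> t1" using pm xt by (auto simp: C_def)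
    have "x \<notin> frontier \<Omega>" using bd zpos tT by force
    then have xO: "x \<in> \<Omega>" using xK op by (simp add: frontier_def interior_open)
    have "t \<noteq> T" using init xK zpos by force
    then have tgt: "t > T" using tT by simp
    show False
    proof (rule noint[OF xO tgt zpos])
      show "\<forall>y\<in>\<Omega>. z y t \<le> z x t"
        using pm(2) xt tT closure_subset by (force simp: C_def)
      show "\<forall>s\<in>{T..t}. z x s \<le> z x t"
        using pm(2) xt tT xK by (force simp: C_def)
    qed
  qed
qed



lemma sym_u:
  assumes op: "open \<Omega>" and C: "C21_with \<Omega> u Du Hu Ut"
  shows "\<forall>x\<in>\<Omega>. \<forall>t\<ge>0. Hu x t $1$2 = Hu x t $2$1"
proof (intro ballI allI impI)
  fix x :: "real^2" and t :: real assume x: "x \<in> \<Omega>" and t: "t \<ge> 0"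
  have d1: "\<forall>y\<in>\<Omega>. ((\<lambda>y. u y t) has_derivative (\<lambda>h. Du y t \<bullet> h)) (at y)"
    and d2: "\<forall>y\<in>\<Omega>. ((\<lambda>y. Du y t) has_derivative (\<lambda>h. Hu y t *v h)) (at y)"
    and cH: "continuous_on (closure \<Omega> \<times> {0..}) (\<lambda>(x,t). Hu x t)"
    using C t by (auto simp: C21_with_def)
  have "continuous_on \<Omega> (\<lambda>y. (\<lambda>(x,t). Hu x t) (y,t))"
    by (rule continuous_on_compose2[OF cH]) (use t closure_subset in \<open>auto intro!: continuous_intros\<close>)
  then have cH': "continuous_on \<Omega> (\<lambda>y. Hu y t)" by simp
  show "Hu x t $1$2 = Hu x t $2$1"
    by (rule schwarz[OF op x d1 d2 cH'])
qed

lemma sym_v: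
  assumes op: "open \<Omega>" and C: "C2_with \<Omega> v Dv Hv"
  shows "\<forall>x\<in>\<Omega>. Hv x $1$2 = Hv x $2$1"
proof
  fix x assume x: "x \<in> \<Omega>"
  have d1: "\<forall>y\<in>\<Omega>. (v has_derivative (\<lambda>h. Dv y \<bullet> h)) (at y)"
    and d2: "\<forall>y\<in>\<Omega>. (Dv has_derivative (\<lambda>h. Hv y *v h)) (at y)"
    and cH: "continuous_on (closure \<Omega>) Hv"
    using C by (auto simp: C2_with_def)
  have cH': "continuous_on \<Omega> Hv" using cH closure_subset continuous_on_subset by blast
  show "Hv x $1$2 = Hv x $2$1"
    by (rule schwarz[OF op x d1 d2 cH'])
qed

lemma lap_pos:
  assumes op: "open \<Omega>" and cn: "connected \<Omega>" and C: "C21_with \<Omega> u Du Hu Ut"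
    and E: "\<forall>x\<in>closure \<Omega>. \<forall>t\<ge>0. E2 (Ut x t) (Hu x t) > 0"
    and x0: "x0 \<in> \<Omega>" "lap2 (Hu x0 0) > 0"
  shows "\<forall>x\<in>\<Omega>. \<forall>t\<ge>0. lap2 (Hu x t) > 0"
proof -
  have sym: "\<forall>x\<in>\<Omega>. \<forall>t\<ge>0. Hu x t $1$2 = Hu x t $2$1" by (rule sym_u[OF op C])
  define P where "P = \<Omega> \<times> {0::real..}"
  define F where "F p = lap2 (Hu (fst p) (snd p))" for p
  have cHu: "continuous_on (closure \<Omega> \<times> {0..}) (\<lambda>(x,t). Hu x t)" using C by (simp add: C21_with_def)
  have "continuous_on P (\<lambda>(x,t). Hu x t)"
    by (rule continuous_on_subset[OF cHu]) (use closure_subset in \<open>auto simp: P_def\<close>)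
  then have "continuous_on P (\<lambda>p. Hu (fst p) (snd p))" by (simp add: case_prod_beta')
  then have cF: "continuous_on P F" unfolding F_def lap2_def by (intro continuous_intros)
  have cP: "connected P" unfolding P_def using cn by (intro connected_Times) auto
  have nz: "F p \<noteq> 0" if "p \<in> P" for p
  proof
    assume F0: "F p = 0"
    obtain x t where p: "p = (x,t)" by (cases p)
    have xt: "x \<in> \<Omega>" "t \<ge> 0" using that p by (auto simp: P_def)
    define H where "H = Hu x t"
    have "H$2$2 = - H$1$1" using F0 p by (simp add: F_def H_def lap2_def)
    moreover have "H$1$2 = H$2$1" using sym xt by (simp add: H_def)
    ultimately have "det H + (H $ 1 $ 1)^2 + (H $ 1 $ 2)^2 = 0" by (simp add: det_2 power2_eq_square)
    moreover have "0 \<le> (H $ 1 $ 1)^2" "0 \<le> (H $ 1 $ 2)^2" by simp_all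
    ultimately have "det H \<le> 0" by linarith
    moreover have "E2 (Ut x t) H > 0" using E xt closure_subset by (auto simp: H_def)
    moreover have "lap2 H = 0" using F0 p by (simp add: F_def H_def)
    ultimately show False by (simp add: E2_def)
  qed
  have "F (x0, 0) > 0" using x0 by (simp add: F_def)
  have "F p > 0" if "p \<in> P" for p
  proof (rule ccontr)
    assume "\<not> F p > 0"
    then have "F p < 0" using nz[OF that] by simp
    have "connected (F ` P)" by (rule connected_continuous_image[OF cF cP])
    moreover have "F p \<in> F ` P" "F (x0,0) \<in> F ` P" using that x0 by (auto simp: P_def)
    ultimately have "0 \<in> F ` P"
      using connectedD_interval[of "F ` P" "F p" "F (x0,0)" 0] \<open>F p < 0\<close> \<open>F (x0, 0) > 0\<close> by auto
    then show False using nz by auto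
  qed
  then show ?thesis by (auto simp: P_def F_def)
qed



lemma qf: fixes M :: "real^2^2"
  assumes "M$1$2 = M$2$1"
  shows "(vector[a,b]::real^2) \<bullet> (M *v vector[a,b]) = M$1$1*a^2 + 2*M$1$2*a*b + M$2$2*b^2"
  using assms by (simp add: form2 power2_eq_square algebra_simps)

lemma qf2: "(vector[a,b]::real^2) \<bullet> vector[a,b] = a^2 + b^2"
  by (simp add: inner_vec_def sum_2 power2_eq_square)

lemma vector2_eq0: "((vector[a,b]::real^2) = 0) \<longleftrightarrow> a = 0 \<and> b = 0"
  by (auto simp: vec_eq_iff forall_2)

lemma pd_facts:
  assumes "pos_def2 H"
  shows "H$1$1 > 0" "H$2$2 > 0" "det H > 0"
proof -
  have P: "0 < (vector[a,b]::real^2) \<bullet> (H *v vector[a,b])" if "a \<noteq> 0 \<or> b \<noteq> 0" for a b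
    using assms that unfolding pos_def2_def by (metis vector2_eq0)
  show "H$1$1 > 0" using P[of 1 0] by (simp add: form2)
  show "H$2$2 > 0" using P[of 0 1] by (simp add: form2)
  define s where "s = H$1$2 + H$2$1"
  have "0 < (vector[s, -2*H$1$1]::real^2) \<bullet> (H *v vector[s, -2*H$1$1])"
    using P \<open>H$1$1 > 0\<close> by simp
  also have "\<dots> = H$1$1 * (4*H$1$1*H$2$2 - s^2)"
    by (simp add: form2 s_def power2_eq_square algebra_simps)
  finally have "4*H$1$1*H$2$2 - s^2 > 0" using \<open>H$1$1 > 0\<close> by (simp add: zero_less_mult_iff)
  moreover have "s^2 - 4*H$1$2*H$2$1 = (H$1$2 - H$2$1)^2" by (simp add: s_def power2_eq_square algebra_simps)
  moreover have "0 \<le> (H$1$2 - H$2$1)^2" by simp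
  ultimately show "det H > 0" unfolding det_2 by linarith
qed

lemma v_consts:
  assumes bdd: "bounded \<Omega>" and ne: "\<Omega> \<noteq> {}" and C: "C2_with \<Omega> v Dv Hv"
    and pd: "\<forall>x\<in>closure \<Omega>. pos_def2 (Hv x)"
  shows "\<exists>\<tau> \<Theta> \<mu>. \<tau> > 0 \<and> \<mu> > 0 \<and> (\<forall>x\<in>closure \<Omega>. \<tau> \<le> lap2 (Hv x) \<and> lap2 (Hv x) \<le> \<Theta> \<and> \<mu> \<le> det (Hv x))"
proof -
  have cK: "compact (closure \<Omega>)" using bdd by simp
  have neK: "closure \<Omega> \<noteq> {}" using ne by simp
  have cH: "continuous_on (closure \<Omega>) Hv" using C by (simp add: C2_with_def)
  have cl: "continuous_on (closure \<Omega>) (\<lambda>x. lap2 (Hv x))"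
    unfolding lap2_def using cH by (intro continuous_intros)
  have cd: "continuous_on (closure \<Omega>) (\<lambda>x. det (Hv x))"
    unfolding det_2 using cH by (intro continuous_intros)
  obtain x1 where x1: "x1 \<in> closure \<Omega>" "\<forall>y\<in>closure \<Omega>. lap2 (Hv x1) \<le> lap2 (Hv y)"
    using continuous_attains_inf[OF cK neK cl] by blast
  obtain x2 where x2: "x2 \<in> closure \<Omega>" "\<forall>y\<in>closure \<Omega>. lap2 (Hv y) \<le> lap2 (Hv x2)"
    using continuous_attains_sup[OF cK neK cl] by blast
  obtain x3 where x3: "x3 \<in> closure \<Omega>" "\<forall>y\<in>closure \<Omega>. det (Hv x3) \<le> det (Hv y)"
    using continuous_attains_inf[OF cK neK cd] by blast
  have "lap2 (Hv x1) > 0" using pd_facts[of "Hv x1"] pd x1 by (simp add: lap2_def)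
  moreover have "det (Hv x3) > 0" using pd_facts[of "Hv x3"] pd x3 by simp
  ultimately show ?thesis using x1 x2 x3 by blast
qed

lemma dz_up:
  assumes "(f has_derivative (\<lambda>h. F \<bullet> h)) (at y)" "(w has_derivative (\<lambda>h. W \<bullet> h)) (at y)"
  shows "((\<lambda>y. f y - w y - c0 - \<delta>*(R^2 - y \<bullet> y) - g0) has_derivative (\<lambda>h. (F - W + (2*\<delta>) *\<^sub>R y) \<bullet> h)) (at y)"
proof -
  have "((\<lambda>y. f y - w y - c0 - \<delta>*(R^2 - y \<bullet> y) - g0) has_derivative
     (\<lambda>h. F \<bullet> h - W \<bullet> h - 0 - \<delta>*(0 - (y \<bullet> h + h \<bullet> y)) - 0)) (at y)"
    using assms by (intro derivative_intros) auto
  moreover have "(\<lambda>h. F \<bullet> h - W \<bullet> h - 0 - \<delta>*(0 - (y \<bullet> h + h \<bullet> y)) - 0) = (\<lambda>h. (F - W + (2*\<delta>) *\<^sub>R y) \<bullet> h)"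
    by (auto simp: fun_eq_iff inner_diff_left inner_add_left inner_commute algebra_simps)
  ultimately show ?thesis by simp
qed

lemma dz_lo:
  assumes "(f has_derivative (\<lambda>h. F \<bullet> h)) (at y)" "(w has_derivative (\<lambda>h. W \<bullet> h)) (at y)"
  shows "((\<lambda>y. w y - c0 - \<delta>*(R^2 - y \<bullet> y) - g0 - f y) has_derivative (\<lambda>h. (W + (2*\<delta>) *\<^sub>R y - F) \<bullet> h)) (at y)"
proof -
  have "((\<lambda>y. w y - c0 - \<delta>*(R^2 - y \<bullet> y) - g0 - f y) has_derivative
     (\<lambda>h. W \<bullet> h - 0 - \<delta>*(0 - (y \<bullet> h + h \<bullet> y)) - 0 - F \<bullet> h)) (at y)"
    using assms by (intro derivative_intros) auto
  moreover have "(\<lambda>h. W \<bullet> h - 0 - \<delta>*(0 - (y \<bullet> h + h \<bullet> y)) - 0 - F \<bullet> h) = (\<lambda>h. (W + (2*\<delta>) *\<^sub>R y - F) \<bullet> h)"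
    by (auto simp: fun_eq_iff inner_diff_left inner_add_left inner_commute algebra_simps)
  ultimately show ?thesis by simp
qed

lemma dG_up:
  assumes "(A has_derivative (\<lambda>h. MA *v h)) (at x)" "(B has_derivative (\<lambda>h. MB *v h)) (at x)"
  shows "((\<lambda>y. A y - B y + (2*\<delta>) *\<^sub>R y) has_derivative (\<lambda>h. MA *v h - MB *v h + (2*\<delta>) *\<^sub>R h)) (at x)"
  using assms by (intro derivative_intros) auto

lemma dG_lo:
  assumes "(A has_derivative (\<lambda>h. MA *v h)) (at x)" "(B has_derivative (\<lambda>h. MB *v h)) (at x)"
  shows "((\<lambda>y. B y + (2*\<delta>) *\<^sub>R y - A y) has_derivative (\<lambda>h. MB *v h + (2*\<delta>) *\<^sub>R h - MA *v h)) (at x)"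
  using assms by (intro derivative_intros) auto

lemma form_up:
  fixes MA MB :: "real^2^2"
  assumes "MA$1$2 = MA$2$1" "MB$1$2 = MB$2$1"
  shows "- ((vector[a,b]::real^2) \<bullet> (MA *v vector[a,b] - MB *v vector[a,b] + (2*\<delta>) *\<^sub>R vector[a,b]))
     = (MB$1$1 - 2*\<delta> - MA$1$1)*a^2 + 2*(MB$1$2 - MA$1$2)*a*b + (MB$2$2 - 2*\<delta> - MA$2$2)*b^2"
  using assms by (simp add: inner_diff_right inner_add_right qf qf2 algebra_simps)

lemma form_lo:
  fixes MA MB :: "real^2^2"
  assumes "MA$1$2 = MA$2$1" "MB$1$2 = MB$2$1"
  shows "- ((vector[a,b]::real^2) \<bullet> (MB *v vector[a,b] + (2*\<delta>) *\<^sub>R vector[a,b] - MA *v vector[a,b]))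
     = (MA$1$1 - MB$1$1 - 2*\<delta>)*a^2 + 2*(MA$1$2 - MB$1$2)*a*b + (MA$2$2 - MB$2$2 - 2*\<delta>)*b^2"
  using assms by (simp add: inner_diff_right inner_add_right qf qf2 algebra_simps)



lemma exp_decay:
  fixes \<kappa> M \<epsilon> T :: real
  assumes k: "\<kappa> > 0" and M: "M > 0" and e: "\<epsilon> > 0"
  shows "\<forall>\<^sub>F t in at_top. M * exp(-\<kappa>*(t-T)) < \<epsilon>"
proof -
  have "M * exp(-\<kappa>*(t-T)) < \<epsilon>" if t: "t \<ge> T + M/(\<epsilon>*\<kappa>)" for t
  proof -
    have "\<kappa>*(t-T) \<ge> \<kappa> * (M/(\<epsilon>*\<kappa>))" using t k by (intro mult_left_mono) auto
    then have a: "\<kappa>*(t-T) \<ge> M/\<epsilon>" using k by simp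
    have "exp (\<kappa>*(t-T)) \<ge> 1 + \<kappa>*(t-T)" by (rule exp_ge_add_one_self)
    then have "exp (\<kappa>*(t-T)) > M/\<epsilon>" using a by linarith
    then have "M < \<epsilon> * exp (\<kappa>*(t-T))" using e by (simp add: divide_less_eq mult.commute)
    moreover have "exp(-\<kappa>*(t-T)) = 1 / exp (\<kappa>*(t-T))" by (simp only: mult_minus_left exp_minus inverse_eq_divide)
    ultimately show ?thesis by (simp add: divide_less_eq)
  qed
  then show ?thesis by (auto simp: eventually_at_top_linorder)
qed



lemma upper_bound:
  fixes \<Omega> :: "(real^2) set"
    and u :: "real^2 \<Rightarrow> real \<Rightarrow> real" and Du :: "real^2 \<Rightarrow> real \<Rightarrow> real^2"
    and Hu :: "real^2 \<Rightarrow> real \<Rightarrow> real^2^2" and Ut :: "real^2 \<Rightarrow> real \<Rightarrow> real"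
    and v :: "real^2 \<Rightarrow> real" and Dv :: "real^2 \<Rightarrow> real^2" and Hv :: "real^2 \<Rightarrow> real^2^2"
    and x0 :: "real^2"
  assumes op: "open \<Omega>" and cn: "connected \<Omega>" and bdd: "bounded \<Omega>" and ne: "\<Omega> \<noteq> {}"
    and C: "C21_with \<Omega> u Du Hu Ut"
    and Epos: "\<forall>x\<in>closure \<Omega>. \<forall>t\<ge>0. E2 (Ut x t) (Hu x t) > 0"
    and CV: "C2_with \<Omega> v Dv Hv"
    and pd: "\<forall>x\<in>closure \<Omega>. pos_def2 (Hv x)"
    and x0: "x0 \<in> \<Omega>" "lap2 (Hu x0 0) > 0"
    and bdry: "\<forall>e>0. \<forall>\<^sub>F t in at_top. \<forall>x\<in>frontier \<Omega>. \<bar>u x t - v x\<bar> < e"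
    and conv: "\<forall>e>0. \<forall>\<^sub>F t in at_top. \<forall>x\<in>closure \<Omega>. \<bar>E2 (Ut x t) (Hu x t) - det (Hv x)\<bar> < e"
    and e: "e > 0"
  shows "\<forall>\<^sub>F t in at_top. \<forall>x\<in>closure \<Omega>. u x t - v x < e"
proof -
  have symU: "\<forall>x\<in>\<Omega>. \<forall>t\<ge>0. Hu x t $1$2 = Hu x t $2$1" by (rule sym_u[OF op C])
  have symV: "\<forall>x\<in>\<Omega>. Hv x $1$2 = Hv x $2$1" by (rule sym_v[OF op CV])
  have lapU: "\<forall>x\<in>\<Omega>. \<forall>t\<ge>0. lap2 (Hu x t) > 0" by (rule lap_pos[OF op cn C Epos x0])
  obtain \<tau> \<Theta> \<mu> where cs: "\<tau> > 0" "\<mu> > 0"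
    "\<forall>x\<in>closure \<Omega>. \<tau> \<le> lap2 (Hv x) \<and> lap2 (Hv x) \<le> \<Theta> \<and> \<mu> \<le> det (Hv x)"
    using v_consts[OF bdd ne CV pd] by blast
  have "bounded (closure \<Omega>)" using bdd by (simp add: bounded_closure)
  then obtain R0 where R0: "\<forall>x\<in>closure \<Omega>. norm x \<le> R0" by (auto simp: bounded_iff)
  define R where "R = max R0 0"
  have R: "R \<ge> 0" "\<forall>x\<in>closure \<Omega>. x \<bullet> x \<le> R^2"
  proof -
    show "R \<ge> 0" by (simp add: R_def)
    show "\<forall>x\<in>closure \<Omega>. x \<bullet> x \<le> R^2"
    proof
      fix x assume "x \<in> closure \<Omega>"
      then have "norm x \<le> R" using R0 by (auto simp: R_def)
      then have "(norm x)^2 \<le> R^2" by (intro power_mono) auto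
      then show "x \<bullet> x \<le> R^2" by (simp add: power2_norm_eq_inner)
    qed
  qed
  obtain xa where xa: "xa \<in> \<Omega>" using ne by blast
  have \<Theta>\<tau>: "\<tau> \<le> \<Theta>" using cs xa closure_subset by force
  define \<delta> where "\<delta> = min (\<tau>/4) (e / (3*(R^2+1)))"
  have \<delta>: "\<delta> > 0" "4*\<delta> \<le> \<tau>" "\<delta> * R^2 < e/3"
  proof -
    have ep: "0 < e / (3*(R^2+1))" using e by (intro divide_pos_pos) (auto intro: add_nonneg_pos)
    show "\<delta> > 0" unfolding \<delta>_def using cs ep by (simp only: min_less_iff_conj) auto
    show "4*\<delta> \<le> \<tau>" by (simp add: \<delta>_def)
    have "\<delta> * R^2 \<le> e / (3*(R^2+1)) * R^2" by (intro mult_right_mono) (auto simp: \<delta>_def)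
    also have "\<dots> = (e/3) * (R^2 / (R^2+1))" by (simp add: field_simps)
    also have "\<dots> < (e/3) * 1" using e by (intro mult_strict_left_mono) (auto simp: add_nonneg_pos)
    finally show "\<delta> * R^2 < e/3" by simp
  qed
  define \<eta> where "\<eta> = min (\<delta>*\<tau>) \<mu> / 3"
  have \<eta>: "\<eta> > 0" "3*\<eta> \<le> \<delta>*\<tau>" "3*\<eta> \<le> \<mu>" using \<delta> cs by (auto simp: \<eta>_def)
  obtain N1 where N1: "\<forall>t\<ge>N1. \<forall>x\<in>frontier \<Omega>. \<bar>u x t - v x\<bar> < e/3"
    using bdry[rule_format, of "e/3"] e by (auto simp: eventually_at_top_linorder)
  obtain N2 where N2: "\<forall>t\<ge>N2. \<forall>x\<in>closure \<Omega>. \<bar>E2 (Ut x t) (Hu x t) - det (Hv x)\<bar> < \<eta>"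
    using conv[rule_format, of \<eta>] \<eta> by (auto simp: eventually_at_top_linorder)
  define T where "T = max 0 (max N1 N2)"
  have T: "T \<ge> 0" "T \<ge> N1" "T \<ge> N2" by (auto simp: T_def)
  have cu: "continuous_on (closure \<Omega> \<times> {0..}) (\<lambda>(x,t). u x t)" using C by (simp add: C21_with_def)
  have cv: "continuous_on (closure \<Omega>) v" using CV by (simp add: C2_with_def)
  have "continuous_on (closure \<Omega>) (\<lambda>y. (\<lambda>(x,t). u x t) (y,T))"
    by (rule continuous_on_compose2[OF cu]) (use T in \<open>auto intro!: continuous_intros\<close>)
  then have cuT: "continuous_on (closure \<Omega>) (\<lambda>x. \<bar>u x T - v x\<bar>)"
    using cv by (auto intro!: continuous_intros)
  obtain xm where xm: "xm \<in> closure \<Omega>" "\<forall>y\<in>closure \<Omega>. \<bar>u y T - v y\<bar> \<le> \<bar>u xm T - v xm\<bar>"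
    using continuous_attains_sup[OF _ _ cuT] bdd ne by auto
  define M' where "M' = \<bar>u xm T - v xm\<bar> + 1"
  have M': "M' > 0" "\<forall>x\<in>closure \<Omega>. \<bar>u x T - v x\<bar> < M'"
    using xm by (auto simp: M'_def)
  define D where "D = \<Theta> + 4*\<delta>"
  have D: "D \<ge> 0" using \<Theta>\<tau> cs \<delta> by (simp add: D_def)
  define m where "m = min \<eta> (2*\<delta>)"
  have m: "m > 0" "m \<le> \<eta>" "m \<le> 2*\<delta>" using \<eta> \<delta> by (auto simp: m_def)
  define \<kappa> where "\<kappa> = m / (M' * (D + 1))"
  have \<kappa>: "\<kappa> > 0" using m M' D by (simp add: \<kappa>_def)
  define g where "g t = M' * exp(-\<kappa>*(t-T))" for t
  have cbound: "0 \<le> \<kappa> * g t \<and> \<kappa> * g t \<le> 2*\<delta> \<and> \<kappa> * g t * D \<le> \<eta>" if "t \<ge> T" for t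
  proof -
    have "exp(-\<kappa>*(t-T)) \<le> 1" using that \<kappa> by simp
    then have gM: "g t \<le> M'" "g t > 0" using M' by (auto simp: g_def)
    have kg: "\<kappa> * g t \<le> \<kappa> * M'" using gM \<kappa> by simp
    have kM: "\<kappa> * M' = m / (D+1)" using M' by (simp add: \<kappa>_def)
    have a: "m / (D+1) \<le> m" using m D by (simp add: divide_le_eq)
    have b: "m / (D+1) * D \<le> m" using m D by (simp add: divide_le_eq field_simps)
    have "\<kappa> * g t * D \<le> m / (D+1) * D" using kg kM D by (intro mult_right_mono) auto
    then show ?thesis using kg kM a b m gM \<kappa> by auto
  qed
  define z where "z x t = u x t - v x - e/3 - \<delta>*(R^2 - x \<bullet> x) - g t" for x t
  have main: "\<forall>x\<in>closure \<Omega>. \<forall>t\<ge>T. z x t \<le> 0"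
  proof (rule comparison[OF op bdd])
    have "continuous_on (closure \<Omega> \<times> {T..}) (\<lambda>(x,t). u x t)"
      by (rule continuous_on_subset[OF cu]) (use T in auto)
    then have c1: "continuous_on (closure \<Omega> \<times> {T..}) (\<lambda>p. u (fst p) (snd p))" by (simp add: case_prod_beta')
    have c2: "continuous_on (closure \<Omega> \<times> {T..}) (\<lambda>p. v (fst p))"
      by (rule continuous_on_compose2[OF cv]) (auto intro!: continuous_intros)
    show "continuous_on (closure \<Omega> \<times> {T..}) (\<lambda>p. z (fst p) (snd p))"
      unfolding z_def g_def using c1 c2 by (intro continuous_intros)
    show "\<forall>x\<in>frontier \<Omega>. \<forall>t\<ge>T. z x t \<le> 0"
    proof (intro ballI allI impI)
      fix x t assume x: "x \<in> frontier \<Omega>" and t: "T \<le> t"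
      have "x \<in> closure \<Omega>" using x by (simp add: frontier_def)
      then have "0 \<le> \<delta>*(R^2 - x \<bullet> x)" using R \<delta> by simp
      moreover have "\<bar>u x t - v x\<bar> < e/3" using N1 x t T by auto
      moreover have "g t > 0" using M' by (simp add: g_def)
      ultimately show "z x t \<le> 0" using abs_ge_self[of "u x t - v x"] unfolding z_def by linarith
    qed
    show "\<forall>x\<in>closure \<Omega>. z x T \<le> 0"
    proof
      fix x assume x: "x \<in> closure \<Omega>"
      then have "0 \<le> \<delta>*(R^2 - x \<bullet> x)" using R \<delta> by simp
      moreover have "\<bar>u x T - v x\<bar> < M'" using M' x by auto
      moreover have "g T = M'" by (simp add: g_def)
      ultimately show "z x T \<le> 0" using e abs_ge_self[of "u x T - v x"] unfolding z_def by linarith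
    qed
    fix x t assume xO: "x \<in> \<Omega>" and tT: "t > T" and zpos: "z x t > 0"
      and mx: "\<forall>y\<in>\<Omega>. z y t \<le> z x t" and mxt: "\<forall>s\<in>{T..t}. z x s \<le> z x t"
    have t0: "t > 0" using tT T by simp
    have xK: "x \<in> closure \<Omega>" using xO closure_subset by blast
    have df: "\<forall>y\<in>\<Omega>. ((\<lambda>y. z y t) has_derivative (\<lambda>k. (Du y t - Dv y + (2*\<delta>) *\<^sub>R y) \<bullet> k)) (at y)"
    proof
      fix y assume y: "y \<in> \<Omega>"
      have a: "((\<lambda>y. u y t) has_derivative (\<lambda>h. Du y t \<bullet> h)) (at y)" using C y t0 by (simp add: C21_with_def)
      have b: "(v has_derivative (\<lambda>h. Dv y \<bullet> h)) (at y)" using CV y by (simp add: C2_with_def)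
      show "((\<lambda>y. z y t) has_derivative (\<lambda>k. (Du y t - Dv y + (2*\<delta>) *\<^sub>R y) \<bullet> k)) (at y)"
        unfolding z_def by (rule dz_up[OF a b])
    qed
    have dG: "((\<lambda>y. Du y t - Dv y + (2*\<delta>) *\<^sub>R y) has_derivative (\<lambda>h. Hu x t *v h - Hv x *v h + (2*\<delta>) *\<^sub>R h)) (at x)"
    proof (rule dG_up)
      show "((\<lambda>y. Du y t) has_derivative (\<lambda>h. Hu x t *v h)) (at x)" using C xO t0 by (simp add: C21_with_def)
      show "(Dv has_derivative (\<lambda>h. Hv x *v h)) (at x)" using CV xO by (simp add: C2_with_def)
    qed
    have so: "h \<bullet> (Hu x t *v h - Hv x *v h + (2*\<delta>) *\<^sub>R h) \<le> 0" for h
      by (rule second_order_max[OF op xO _ df dG]) (use mx in auto)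
    define a11 where "a11 = Hu x t $1$1"
    define a12 where "a12 = Hu x t $1$2"
    define a22 where "a22 = Hu x t $2$2"
    define p where "p = Hv x $1$1"
    define q where "q = Hv x $1$2"
    define r where "r = Hv x $2$2"
    have sU: "Hu x t $1$2 = Hu x t $2$1" using symU xO t0 by auto
    have sV: "Hv x $1$2 = Hv x $2$1" using symV xO by auto
    have psd: "\<forall>a b. 0 \<le> (p - 2*\<delta> - a11)*a^2 + 2*(q - a12)*a*b + (r - 2*\<delta> - a22)*b^2"
    proof (intro allI)
      fix a b :: real
      have "0 \<le> - ((vector[a,b]::real^2) \<bullet> (Hu x t *v vector[a,b] - Hv x *v vector[a,b] + (2*\<delta>) *\<^sub>R vector[a,b]))"
        using so[of "vector[a,b]"] by simp
      then show "0 \<le> (p - 2*\<delta> - a11)*a^2 + 2*(q - a12)*a*b + (r - 2*\<delta> - a22)*b^2"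
        unfolding form_up[OF sU sV] by (simp add: a11_def a12_def a22_def p_def q_def r_def)
    qed
    have dphi: "((\<lambda>s. z x s) has_real_derivative (Ut x t + \<kappa> * g t)) (at t)"
    proof -
      have a0: "((\<lambda>s. u x s) has_real_derivative Ut x t) (at t within {0..})"
        using C xO t0 unfolding C21_with_def by auto
      have a: "((\<lambda>s. u x s) has_real_derivative Ut x t) (at t)"
        using a0 at_pos_within[OF t0] by simp
      have "((\<lambda>s. u x s - v x - e/3 - \<delta>*(R^2 - x \<bullet> x) - M' * exp(-\<kappa>*(s-T))) has_real_derivative
          (Ut x t - 0 - 0 - 0 - (-\<kappa> * (M' * exp(-\<kappa>*(t-T)))))) (at t)"
      proof (intro DERIV_diff a DERIV_const)
        show "((\<lambda>s. M' * exp(-\<kappa>*(s-T))) has_real_derivative (-\<kappa> * (M' * exp(-\<kappa>*(t-T))))) (at t)"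
          by (auto intro!: derivative_eq_intros)
      qed
      then show ?thesis by (simp add: z_def g_def algebra_simps)
    qed
    have tpos: "Ut x t + \<kappa> * g t \<ge> 0"
      by (rule time_max[OF tT dphi mxt])
    have cb: "0 \<le> \<kappa> * g t" "\<kappa> * g t * D \<le> \<eta>" using cbound[of t] tT by auto
    have lapv: "\<tau> \<le> p + r" "p + r \<le> \<Theta>" "\<mu> \<le> p*r - q^2"
      using cs xK sV by (auto simp: lap2_def det_2 p_def q_def r_def power2_eq_square)
    have "\<kappa> * g t * (p+r) \<le> \<kappa> * g t * D"
      using cb lapv \<delta> by (intro mult_left_mono) (auto simp: D_def)
    then have cpr: "\<kappa> * g t * (p+r) \<le> \<eta>" using cb by linarith
    have Eq: "E2 (Ut x t) (Hu x t) = -Ut x t*(a11+a22) + (a11*a22 - a12^2)"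
      using sU by (simp add: E2_def lap2_def det_2 a11_def a12_def a22_def power2_eq_square)
    have "\<bar>E2 (Ut x t) (Hu x t) - det (Hv x)\<bar> < \<eta>" using N2 xK tT T by auto
    moreover have "det (Hv x) = p*r - q^2" using sV by (simp add: det_2 p_def q_def r_def power2_eq_square)
    ultimately have f: "E2 (Ut x t) (Hu x t) > p*r - q^2 - \<eta>" by linarith
    have la: "a11 + a22 > 0" using lapU xO t0 by (auto simp: lap2_def a11_def a22_def)
    show False
      by (rule upper_final[OF psd la _ cb(1) cpr Eq f lapv(1) \<delta>(2) _ lapv(3) \<eta>(2,3)])
         (use tpos \<delta> \<eta> in auto)
  qed
  have ev: "\<forall>\<^sub>F t in at_top. t \<ge> T \<and> g t < e/3"
    using eventually_conj[OF eventually_ge_at_top[of T] exp_decay[OF \<kappa> M'(1), of "e/3" T]] e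
    by (simp add: g_def)
  show ?thesis
  proof (rule eventually_mono[OF ev], intro ballI)
    fix t x assume t: "T \<le> t \<and> g t < e/3" and x: "x \<in> closure \<Omega>"
    have zz: "z x t \<le> 0" using main x t by auto
    have "0 \<le> x \<bullet> x" by simp
    then have dd: "\<delta>*(R^2 - x \<bullet> x) \<le> \<delta> * R^2" using \<delta> by (simp add: mult_left_mono)
    show "u x t - v x < e" using zz dd t \<delta> unfolding z_def by linarith
  qed
qed



lemma lower_bound:
  fixes \<Omega> :: "(real^2) set"
    and u :: "real^2 \<Rightarrow> real \<Rightarrow> real" and Du :: "real^2 \<Rightarrow> real \<Rightarrow> real^2"
    and Hu :: "real^2 \<Rightarrow> real \<Rightarrow> real^2^2" and Ut :: "real^2 \<Rightarrow> real \<Rightarrow> real"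
    and v :: "real^2 \<Rightarrow> real" and Dv :: "real^2 \<Rightarrow> real^2" and Hv :: "real^2 \<Rightarrow> real^2^2"
    and x0 :: "real^2"
  assumes op: "open \<Omega>" and cn: "connected \<Omega>" and bdd: "bounded \<Omega>" and ne: "\<Omega> \<noteq> {}"
    and C: "C21_with \<Omega> u Du Hu Ut"
    and Epos: "\<forall>x\<in>closure \<Omega>. \<forall>t\<ge>0. E2 (Ut x t) (Hu x t) > 0"
    and CV: "C2_with \<Omega> v Dv Hv"
    and pd: "\<forall>x\<in>closure \<Omega>. pos_def2 (Hv x)"
    and x0: "x0 \<in> \<Omega>" "lap2 (Hu x0 0) > 0"
    and bdry: "\<forall>e>0. \<forall>\<^sub>F t in at_top. \<forall>x\<in>frontier \<Omega>. \<bar>u x t - v x\<bar> < e"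
    and conv: "\<forall>e>0. \<forall>\<^sub>F t in at_top. \<forall>x\<in>closure \<Omega>. \<bar>E2 (Ut x t) (Hu x t) - det (Hv x)\<bar> < e"
    and e: "e > 0"
  shows "\<forall>\<^sub>F t in at_top. \<forall>x\<in>closure \<Omega>. v x - u x t < e"
proof -
  have symU: "\<forall>x\<in>\<Omega>. \<forall>t\<ge>0. Hu x t $1$2 = Hu x t $2$1" by (rule sym_u[OF op C])
  have symV: "\<forall>x\<in>\<Omega>. Hv x $1$2 = Hv x $2$1" by (rule sym_v[OF op CV])
  have lapU: "\<forall>x\<in>\<Omega>. \<forall>t\<ge>0. lap2 (Hu x t) > 0" by (rule lap_pos[OF op cn C Epos x0])
  obtain \<tau> \<Theta> \<mu> where cs: "\<tau> > 0" "\<mu> > 0"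
    "\<forall>x\<in>closure \<Omega>. \<tau> \<le> lap2 (Hv x) \<and> lap2 (Hv x) \<le> \<Theta> \<and> \<mu> \<le> det (Hv x)"
    using v_consts[OF bdd ne CV pd] by blast
  have "bounded (closure \<Omega>)" using bdd by (simp add: bounded_closure)
  then obtain R0 where R0: "\<forall>x\<in>closure \<Omega>. norm x \<le> R0" by (auto simp: bounded_iff)
  define R where "R = max R0 0"
  have R: "R \<ge> 0" "\<forall>x\<in>closure \<Omega>. x \<bullet> x \<le> R^2"
  proof -
    show "R \<ge> 0" by (simp add: R_def)
    show "\<forall>x\<in>closure \<Omega>. x \<bullet> x \<le> R^2"
    proof
      fix x assume "x \<in> closure \<Omega>"
      then have "norm x \<le> R" using R0 by (auto simp: R_def)
      then have "(norm x)^2 \<le> R^2" by (intro power_mono) auto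
      then show "x \<bullet> x \<le> R^2" by (simp add: power2_norm_eq_inner)
    qed
  qed
  obtain xa where xa: "xa \<in> \<Omega>" using ne by blast
  have \<Theta>\<tau>: "\<tau> \<le> \<Theta>" using cs xa closure_subset by force
  define \<delta> where "\<delta> = min (\<tau>/4) (e / (3*(R^2+1)))"
  have \<delta>: "\<delta> > 0" "4*\<delta> \<le> \<tau>" "\<delta> * R^2 < e/3"
  proof -
    have ep: "0 < e / (3*(R^2+1))" using e by (intro divide_pos_pos) (auto intro: add_nonneg_pos)
    show "\<delta> > 0" unfolding \<delta>_def using cs ep by (simp only: min_less_iff_conj) auto
    show "4*\<delta> \<le> \<tau>" by (simp add: \<delta>_def)
    have "\<delta> * R^2 \<le> e / (3*(R^2+1)) * R^2" by (intro mult_right_mono) (auto simp: \<delta>_def)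
    also have "\<dots> = (e/3) * (R^2 / (R^2+1))" by (simp add: field_simps)
    also have "\<dots> < (e/3) * 1" using e by (intro mult_strict_left_mono) (auto simp: add_nonneg_pos)
    finally show "\<delta> * R^2 < e/3" by simp
  qed
  define \<eta> where "\<eta> = min (\<delta>*\<tau>) \<mu> / 3"
  have \<eta>: "\<eta> > 0" "3*\<eta> \<le> \<delta>*\<tau>" "3*\<eta> \<le> \<mu>" using \<delta> cs by (auto simp: \<eta>_def)
  obtain N1 where N1: "\<forall>t\<ge>N1. \<forall>x\<in>frontier \<Omega>. \<bar>u x t - v x\<bar> < e/3"
    using bdry[rule_format, of "e/3"] e by (auto simp: eventually_at_top_linorder)
  obtain N2 where N2: "\<forall>t\<ge>N2. \<forall>x\<in>closure \<Omega>. \<bar>E2 (Ut x t) (Hu x t) - det (Hv x)\<bar> < \<eta>"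
    using conv[rule_format, of \<eta>] \<eta> by (auto simp: eventually_at_top_linorder)
  define T where "T = max 0 (max N1 N2)"
  have T: "T \<ge> 0" "T \<ge> N1" "T \<ge> N2" by (auto simp: T_def)
  have cu: "continuous_on (closure \<Omega> \<times> {0..}) (\<lambda>(x,t). u x t)" using C by (simp add: C21_with_def)
  have cv: "continuous_on (closure \<Omega>) v" using CV by (simp add: C2_with_def)
  have "continuous_on (closure \<Omega>) (\<lambda>y. (\<lambda>(x,t). u x t) (y,T))"
    by (rule continuous_on_compose2[OF cu]) (use T in \<open>auto intro!: continuous_intros\<close>)
  then have cuT: "continuous_on (closure \<Omega>) (\<lambda>x. \<bar>u x T - v x\<bar>)"
    using cv by (auto intro!: continuous_intros)
  obtain xm where xm: "xm \<in> closure \<Omega>" "\<forall>y\<in>closure \<Omega>. \<bar>u y T - v y\<bar> \<le> \<bar>u xm T - v xm\<bar>"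
    using continuous_attains_sup[OF _ _ cuT] bdd ne by auto
  define M' where "M' = \<bar>u xm T - v xm\<bar> + 1"
  have M': "M' > 0" "\<forall>x\<in>closure \<Omega>. \<bar>u x T - v x\<bar> < M'"
    using xm by (auto simp: M'_def)
  define D where "D = \<Theta> + 4*\<delta>"
  have D: "D \<ge> 0" using \<Theta>\<tau> cs \<delta> by (simp add: D_def)
  define m where "m = min \<eta> (2*\<delta>)"
  have m: "m > 0" "m \<le> \<eta>" "m \<le> 2*\<delta>" using \<eta> \<delta> by (auto simp: m_def)
  define \<kappa> where "\<kappa> = m / (M' * (D + 1))"
  have \<kappa>: "\<kappa> > 0" using m M' D by (simp add: \<kappa>_def)
  define g where "g t = M' * exp(-\<kappa>*(t-T))" for t
  have cbound: "0 \<le> \<kappa> * g t \<and> \<kappa> * g t \<le> 2*\<delta> \<and> \<kappa> * g t * D \<le> \<eta>" if "t \<ge> T" for t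
  proof -
    have "exp(-\<kappa>*(t-T)) \<le> 1" using that \<kappa> by simp
    then have gM: "g t \<le> M'" "g t > 0" using M' by (auto simp: g_def)
    have kg: "\<kappa> * g t \<le> \<kappa> * M'" using gM \<kappa> by simp
    have kM: "\<kappa> * M' = m / (D+1)" using M' by (simp add: \<kappa>_def)
    have a: "m / (D+1) \<le> m" using m D by (simp add: divide_le_eq)
    have b: "m / (D+1) * D \<le> m" using m D by (simp add: divide_le_eq field_simps)
    have "\<kappa> * g t * D \<le> m / (D+1) * D" using kg kM D by (intro mult_right_mono) auto
    then show ?thesis using kg kM a b m gM \<kappa> by auto
  qed
  define z where "z x t = v x - e/3 - \<delta>*(R^2 - x \<bullet> x) - g t - u x t" for x t
  have main: "\<forall>x\<in>closure \<Omega>. \<forall>t\<ge>T. z x t \<le> 0"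
  proof (rule comparison[OF op bdd])
    have "continuous_on (closure \<Omega> \<times> {T..}) (\<lambda>(x,t). u x t)"
      by (rule continuous_on_subset[OF cu]) (use T in auto)
    then have c1: "continuous_on (closure \<Omega> \<times> {T..}) (\<lambda>p. u (fst p) (snd p))" by (simp add: case_prod_beta')
    have c2: "continuous_on (closure \<Omega> \<times> {T..}) (\<lambda>p. v (fst p))"
      by (rule continuous_on_compose2[OF cv]) (auto intro!: continuous_intros)
    show "continuous_on (closure \<Omega> \<times> {T..}) (\<lambda>p. z (fst p) (snd p))"
      unfolding z_def g_def using c1 c2 by (intro continuous_intros)
    show "\<forall>x\<in>frontier \<Omega>. \<forall>t\<ge>T. z x t \<le> 0"
    proof (intro ballI allI impI)
      fix x t assume x: "x \<in> frontier \<Omega>" and t: "T \<le> t"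
      have "x \<in> closure \<Omega>" using x by (simp add: frontier_def)
      then have "0 \<le> \<delta>*(R^2 - x \<bullet> x)" using R \<delta> by simp
      moreover have "\<bar>u x t - v x\<bar> < e/3" using N1 x t T by auto
      moreover have "g t > 0" using M' by (simp add: g_def)
      ultimately show "z x t \<le> 0" using abs_ge_minus_self[of "u x t - v x"] unfolding z_def by linarith
    qed
    show "\<forall>x\<in>closure \<Omega>. z x T \<le> 0"
    proof
      fix x assume x: "x \<in> closure \<Omega>"
      then have "0 \<le> \<delta>*(R^2 - x \<bullet> x)" using R \<delta> by simp
      moreover have "\<bar>u x T - v x\<bar> < M'" using M' x by auto
      moreover have "g T = M'" by (simp add: g_def)
      ultimately show "z x T \<le> 0" using e abs_ge_minus_self[of "u x T - v x"] unfolding z_def by linarith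
    qed
    fix x t assume xO: "x \<in> \<Omega>" and tT: "t > T" and zpos: "z x t > 0"
      and mx: "\<forall>y\<in>\<Omega>. z y t \<le> z x t" and mxt: "\<forall>s\<in>{T..t}. z x s \<le> z x t"
    have t0: "t > 0" using tT T by simp
    have xK: "x \<in> closure \<Omega>" using xO closure_subset by blast
    have df: "\<forall>y\<in>\<Omega>. ((\<lambda>y. z y t) has_derivative (\<lambda>k. (Dv y + (2*\<delta>) *\<^sub>R y - Du y t) \<bullet> k)) (at y)"
    proof
      fix y assume y: "y \<in> \<Omega>"
      have a: "((\<lambda>y. u y t) has_derivative (\<lambda>h. Du y t \<bullet> h)) (at y)" using C y t0 by (simp add: C21_with_def)
      have b: "(v has_derivative (\<lambda>h. Dv y \<bullet> h)) (at y)" using CV y by (simp add: C2_with_def)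
      show "((\<lambda>y. z y t) has_derivative (\<lambda>k. (Dv y + (2*\<delta>) *\<^sub>R y - Du y t) \<bullet> k)) (at y)"
        unfolding z_def by (rule dz_lo[OF a b])
    qed
    have dG: "((\<lambda>y. Dv y + (2*\<delta>) *\<^sub>R y - Du y t) has_derivative (\<lambda>h. Hv x *v h + (2*\<delta>) *\<^sub>R h - Hu x t *v h)) (at x)"
    proof (rule dG_lo)
      show "((\<lambda>y. Du y t) has_derivative (\<lambda>h. Hu x t *v h)) (at x)" using C xO t0 by (simp add: C21_with_def)
      show "(Dv has_derivative (\<lambda>h. Hv x *v h)) (at x)" using CV xO by (simp add: C2_with_def)
    qed
    have so: "h \<bullet> (Hv x *v h + (2*\<delta>) *\<^sub>R h - Hu x t *v h) \<le> 0" for h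
      by (rule second_order_max[OF op xO _ df dG]) (use mx in auto)
    define a11 where "a11 = Hu x t $1$1"
    define a12 where "a12 = Hu x t $1$2"
    define a22 where "a22 = Hu x t $2$2"
    define p where "p = Hv x $1$1"
    define q where "q = Hv x $1$2"
    define r where "r = Hv x $2$2"
    have sU: "Hu x t $1$2 = Hu x t $2$1" using symU xO t0 by auto
    have sV: "Hv x $1$2 = Hv x $2$1" using symV xO by auto
    have psd: "\<forall>a b. 0 \<le> (a11 - p - 2*\<delta>)*a^2 + 2*(a12 - q)*a*b + (a22 - r - 2*\<delta>)*b^2"
    proof (intro allI)
      fix a b :: real
      have "0 \<le> - ((vector[a,b]::real^2) \<bullet> (Hv x *v vector[a,b] + (2*\<delta>) *\<^sub>R vector[a,b] - Hu x t *v vector[a,b]))"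
        using so[of "vector[a,b]"] by simp
      then show "0 \<le> (a11 - p - 2*\<delta>)*a^2 + 2*(a12 - q)*a*b + (a22 - r - 2*\<delta>)*b^2"
        unfolding form_lo[OF sU sV] by (simp add: a11_def a12_def a22_def p_def q_def r_def)
    qed
    have dphi: "((\<lambda>s. z x s) has_real_derivative (\<kappa> * g t - Ut x t)) (at t)"
    proof -
      have a0: "((\<lambda>s. u x s) has_real_derivative Ut x t) (at t within {0..})"
        using C xO t0 unfolding C21_with_def by auto
      have a: "((\<lambda>s. u x s) has_real_derivative Ut x t) (at t)"
        using a0 at_pos_within[OF t0] by simp
      have "((\<lambda>s. v x - e/3 - \<delta>*(R^2 - x \<bullet> x) - M' * exp(-\<kappa>*(s-T)) - u x s) has_real_derivative
          (0 - 0 - 0 - (-\<kappa> * (M' * exp(-\<kappa>*(t-T)))) - Ut x t)) (at t)"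
      proof (intro DERIV_diff a DERIV_const)
        show "((\<lambda>s. M' * exp(-\<kappa>*(s-T))) has_real_derivative (-\<kappa> * (M' * exp(-\<kappa>*(t-T))))) (at t)"
          by (auto intro!: derivative_eq_intros)
      qed
      then show ?thesis by (simp add: z_def g_def algebra_simps)
    qed
    have tpos: "\<kappa> * g t - Ut x t \<ge> 0"
      by (rule time_max[OF tT dphi mxt])
    have cb: "0 \<le> \<kappa> * g t" "\<kappa> * g t * D \<le> \<eta>" "\<kappa> * g t \<le> 2*\<delta>" using cbound[of t] tT by auto
    have lapv: "\<tau> \<le> p + r" "p + r \<le> \<Theta>" "\<mu> \<le> p*r - q^2"
      using cs xK sV by (auto simp: lap2_def det_2 p_def q_def r_def power2_eq_square)
    have "\<kappa> * g t * (p+r+4*\<delta>) \<le> \<kappa> * g t * D"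
      using cb lapv \<delta> by (intro mult_left_mono) (auto simp: D_def)
    then have cpr: "\<kappa> * g t * (p+r+4*\<delta>) \<le> \<eta>" using cb by linarith
    have Eq: "E2 (Ut x t) (Hu x t) = -Ut x t*(a11+a22) + (a11*a22 - a12^2)"
      using sU by (simp add: E2_def lap2_def det_2 a11_def a12_def a22_def power2_eq_square)
    have "\<bar>E2 (Ut x t) (Hu x t) - det (Hv x)\<bar> < \<eta>" using N2 xK tT T by auto
    moreover have "det (Hv x) = p*r - q^2" using sV by (simp add: det_2 p_def q_def r_def power2_eq_square)
    ultimately have f: "E2 (Ut x t) (Hu x t) < p*r - q^2 + \<eta>" by linarith
    have la: "a11 + a22 > 0" using lapU xO t0 by (auto simp: lap2_def a11_def a22_def)
    have pdx: "p > 0" "r > 0" "p*r - q^2 > 0"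
      using pd_facts[of "Hv x"] pd xK sV by (auto simp: det_2 p_def q_def r_def power2_eq_square)
    show False
      by (rule lower_final[OF psd _ _ _ _ cb(1) cb(3) cpr Eq f lapv(1) _ \<eta>(2)])
         (use tpos \<delta> \<eta> pdx in auto)
  qed
  have ev: "\<forall>\<^sub>F t in at_top. t \<ge> T \<and> g t < e/3"
    using eventually_conj[OF eventually_ge_at_top[of T] exp_decay[OF \<kappa> M'(1), of "e/3" T]] e
    by (simp add: g_def)
  show ?thesis
  proof (rule eventually_mono[OF ev], intro ballI)
    fix t x assume t: "T \<le> t \<and> g t < e/3" and x: "x \<in> closure \<Omega>"
    have zz: "z x t \<le> 0" using main x t by auto
    have "0 \<le> x \<bullet> x" by simp
    then have dd: "\<delta>*(R^2 - x \<bullet> x) \<le> \<delta> * R^2" using \<delta> by (simp add: mult_left_mono)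
    show "v x - u x t < e" using zz dd t \<delta> unfolding z_def by linarith
  qed
qed

theorem theorem1p1:
  fixes \<Omega> :: "(real^2) set"
    and u :: "real^2 \<Rightarrow> real \<Rightarrow> real" and Du :: "real^2 \<Rightarrow> real \<Rightarrow> real^2"
    and Hu :: "real^2 \<Rightarrow> real \<Rightarrow> real^2^2" and Ut :: "real^2 \<Rightarrow> real \<Rightarrow> real"
    and v :: "real^2 \<Rightarrow> real" and Dv :: "real^2 \<Rightarrow> real^2" and Hv :: "real^2 \<Rightarrow> real^2^2"
    and x0 :: "real^2"
  assumes "open \<Omega>" and "connected \<Omega>" and "bounded \<Omega>" and "\<Omega> \<noteq> {}"
    and "C21_with \<Omega> u Du Hu Ut"
    and "\<forall>x\<in>closure \<Omega>. \<forall>t\<ge>0. E2 (Ut x t) (Hu x t) > 0"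
    and "C2_with \<Omega> v Dv Hv"
    and "\<forall>x\<in>closure \<Omega>. pos_def2 (Hv x)"
    and "x0 \<in> \<Omega>" and "lap2 (Hu x0 0) > 0"
    and "\<forall>e>0. \<forall>\<^sub>F t in at_top. \<forall>x\<in>frontier \<Omega>. \<bar>u x t - v x\<bar> < e"
    and "\<forall>e>0. \<forall>\<^sub>F t in at_top. \<forall>x\<in>closure \<Omega>. \<bar>E2 (Ut x t) (Hu x t) - det (Hv x)\<bar> < e"
  shows "\<forall>e>0. \<forall>\<^sub>F t in at_top. \<forall>x\<in>closure \<Omega>. \<bar>u x t - v x\<bar> < e"
  proof (intro allI impI)
  fix e :: real assume e: "e > 0"
  have up: "\<forall>\<^sub>F t in at_top. \<forall>x\<in>closure \<Omega>. u x t - v x < e"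
    by (rule upper_bound[OF assms e])
  have lo: "\<forall>\<^sub>F t in at_top. \<forall>x\<in>closure \<Omega>. v x - u x t < e"
    by (rule lower_bound[OF assms e])
  show "\<forall>\<^sub>F t in at_top. \<forall>x\<in>closure \<Omega>. \<bar>u x t - v x\<bar> < e"
    using eventually_conj[OF up lo] by (rule eventually_mono) (auto simp: abs_less_iff)
qed

end
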